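(* Let $q$ be a prime power. If $M$ is a round matroid that contains a $U_{2,q+2}$-restriction and a $\mathrm{PG}(2,q)$-restriction, then $M$ has a $U_{2,q^2+1}$-minor.
   Context: A matroid $M$ is round if $E(M)$ cannot be partitioned into two sets each of rank less than $r(M)$. $\mathrm{PG}(2,q)$ is the projective plane over $\mathrm{GF}(q)$; $U_{2,m}$ is the uniform matroid of rank $2$ on $m$ elements. *)

theory Defs
  imports "HOL-Analysis.Finite_Cartesian_Product"
begin

record 'a matroid =
  ground :: "'a set"
  indep  :: "'a set \<Rightarrow> bool"

definition matroid :: "'a matroid \<Rightarrow> bool" where
  "matroid M \<longleftrightarrow>
     finite (ground M) \<and>
     indep M {} \<and>
     (\<forall>I. indep M I \<longrightarrow> I \<subseteq> ground M) \<and>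
     (\<forall>I J. indep M J \<and> I \<subseteq> J \<longrightarrow> indep M I) \<and>
     (\<forall>I J. indep M I \<and> indep M J \<and> card I < card J \<longrightarrow>
        (\<exists>x \<in> J - I. indep M (insert x I)))"

definition mrank :: "'a matroid \<Rightarrow> 'a set \<Rightarrow> nat" where
  "mrank M X = Max (card ` {I. I \<subseteq> X \<and> indep M I})"

definition matroid_rank :: "'a matroid \<Rightarrow> nat" where
  "matroid_rank M = mrank M (ground M)"

definition round_matroid :: "'a matroid \<Rightarrow> bool" where
  "round_matroid M \<longleftrightarrow>
     \<not> (\<exists>X Y. X \<union> Y = ground M \<and> X \<inter> Y = {} \<and>
              mrank M X < matroid_rank M \<and> mrank M Y < matroid_rank M)"

definition restrict :: "'a matroid \<Rightarrow> 'a set \<Rightarrow> 'a matroid" where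
  "restrict M X = \<lparr>ground = X, indep = (\<lambda>I. indep M I \<and> I \<subseteq> X)\<rparr>"

definition delete :: "'a matroid \<Rightarrow> 'a set \<Rightarrow> 'a matroid" where
  "delete M D = restrict M (ground M - D)"

definition contract :: "'a matroid \<Rightarrow> 'a set \<Rightarrow> 'a matroid" where
  "contract M C = \<lparr>ground = ground M - C,
     indep = (\<lambda>I. I \<subseteq> ground M - C \<and> mrank M (I \<union> C) = card I + mrank M C)\<rparr>"

definition matroid_iso :: "'a matroid \<Rightarrow> 'b matroid \<Rightarrow> bool" where
  "matroid_iso M N \<longleftrightarrow>
     (\<exists>f. bij_betw f (ground M) (ground N) \<and>
          (\<forall>I. I \<subseteq> ground M \<longrightarrow> (indep M I \<longleftrightarrow> indep N (f ` I))))"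

definition has_restriction :: "'a matroid \<Rightarrow> 'b matroid \<Rightarrow> bool" where
  "has_restriction M N \<longleftrightarrow> (\<exists>X. X \<subseteq> ground M \<and> matroid_iso (restrict M X) N)"

definition has_minor :: "'a matroid \<Rightarrow> 'b matroid \<Rightarrow> bool" where
  "has_minor M N \<longleftrightarrow>
     (\<exists>C D. C \<subseteq> ground M \<and> D \<subseteq> ground M \<and> C \<inter> D = {} \<and>
            matroid_iso (contract (delete M D) C) N)"

definition uniform :: "nat \<Rightarrow> nat \<Rightarrow> nat matroid" where
  "uniform k m = \<lparr>ground = {0..<m}, indep = (\<lambda>I. I \<subseteq> {0..<m} \<and> card I \<le> k)\<rparr>"

text \<open>Points: the 1-dimensional subspaces of F^3. A set S of points is independent iff
  the points are linearly independent, i.e. whenever vectors w_L \<in> L (L \<in> S) sum to 0,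
  all w_L are 0.\<close>
definition PG2_points :: "('f::field ^ 3) set set" where
  "PG2_points = {{c *s v | c. True} | v. v \<noteq> 0}"

definition PG2 :: "('f::field ^ 3) set matroid" where
  "PG2 = \<lparr>ground = PG2_points,
          indep = (\<lambda>S. S \<subseteq> PG2_points \<and> finite S \<and>
             (\<forall>w. (\<forall>L\<in>S. w L \<in> L) \<and> (\<Sum>L\<in>S. w L) = 0 \<longrightarrow> (\<forall>L\<in>S. w L = 0)))\<rparr>"

end

theory Submission
  imports Defs "HOL-Analysis.Cartesian_Space"
begin



definition pln :: "'f::field ^ 3 \<Rightarrow> ('f ^ 3) set" where "pln v = {c *s v | c. True}"

lemma pln_mem: "x \<in> pln v \<longleftrightarrow> (\<exists>c. x = c *s v)"
  by (auto simp: pln_def)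

lemma pln_span: "pln v = vec.span {v}"
  by (auto simp: pln_def vec.span_singleton)

lemma pln_self: "v \<in> pln v"
  by (metis pln_mem vector_smult_lid)

lemma pln_of_mem: assumes "w \<in> pln v" "w \<noteq> 0" shows "pln w = pln v"
proof -
  obtain c where c: "w = c *s v" using assms pln_mem by blast
  have "c \<noteq> 0" using assms(2) c by auto
  show ?thesis
  proof (rule set_eqI)
    fix x
    have "(\<exists>d. x = d *s w) \<longleftrightarrow> (\<exists>e. x = e *s v)"
    proof
      assume "\<exists>d. x = d *s w" then obtain d where "x = d *s w" by blast
      then show "\<exists>e. x = e *s v" by (intro exI[of _ "d * c"]) (simp add: c vector_smult_assoc)
    next
      assume "\<exists>e. x = e *s v" then obtain e where "x = e *s v" by blast
      then show "\<exists>d. x = d *s w" using \<open>c \<noteq> 0\<close>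
        by (intro exI[of _ "e / c"]) (simp add: c vector_smult_assoc)
    qed
    then show "x \<in> pln w \<longleftrightarrow> x \<in> pln v" by (simp add: pln_mem)
  qed
qed

lemma pln_in: "v \<noteq> 0 \<Longrightarrow> pln v \<in> PG2_points"
  by (auto simp: PG2_points_def pln_def)

definition rep :: "('f::field ^ 3) set \<Rightarrow> 'f ^ 3" where
  "rep L = (SOME v. v \<noteq> 0 \<and> L = pln v)"

lemma rep: assumes "L \<in> PG2_points" shows "rep L \<noteq> 0" "pln (rep L) = L"
proof -
  have "\<exists>v. v \<noteq> 0 \<and> L = pln v" using assms by (auto simp: PG2_points_def pln_def)
  then have "rep L \<noteq> 0 \<and> L = pln (rep L)" unfolding rep_def by (rule someI_ex)
  then show "rep L \<noteq> 0" "pln (rep L) = L" by auto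
qed

lemma rep_in: "L \<in> PG2_points \<Longrightarrow> rep L \<in> L"
  by (metis rep(2) pln_self)

lemma inj_rep: "J \<subseteq> PG2_points \<Longrightarrow> inj_on rep J"
  by (metis inj_onI rep(2) subsetD)

lemma indep_PG2_iff:
  assumes J: "J \<subseteq> PG2_points" "finite J"
  shows "indep PG2 J \<longleftrightarrow> vec.independent (rep ` J)"
proof
  assume H: "indep PG2 J"
  show "vec.independent (rep ` J)"
    unfolding vec.independent_explicit
  proof (intro conjI allI impI ballI)
    show "finite (rep ` J)" using J by simp
    fix c v assume s: "(\<Sum>v\<in>rep ` J. c v *s v) = 0" and v: "v \<in> rep ` J"
    define w where "w L = c (rep L) *s rep L" for L
    have "\<forall>L\<in>J. w L \<in> L" using J unfolding w_def
      by (metis pln_mem rep(2) subsetD)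
    moreover have "(\<Sum>L\<in>J. w L) = 0"
      using s unfolding w_def sum.reindex[OF inj_rep[OF J(1)]] by (simp add: o_def)
    ultimately have "\<forall>L\<in>J. w L = 0" using H by (simp add: PG2_def)
    then show "c v = 0" using v J unfolding w_def by (auto dest: rep(1))
  qed
next
  assume I: "vec.independent (rep ` J)"
  show "indep PG2 J"
  proof -
    { fix w assume w: "\<forall>L\<in>J. w L \<in> L" and s: "(\<Sum>L\<in>J. w L) = 0"
      define cf where "cf L = (SOME c. w L = c *s rep L)" for L
      have cf: "w L = cf L *s rep L" if "L \<in> J" for L
      proof -
        have "\<exists>c. w L = c *s rep L" using w that J by (metis pln_mem rep(2) subsetD)
        then show ?thesis unfolding cf_def by (rule someI_ex)
      qed
      define c where "c v = cf (the_inv_into J rep v)" for v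
      have "(\<Sum>v\<in>rep ` J. c v *s v) = (\<Sum>L\<in>J. c (rep L) *s rep L)"
        by (simp add: sum.reindex[OF inj_rep[OF J(1)]] o_def)
      also have "\<dots> = (\<Sum>L\<in>J. w L)"
        by (rule sum.cong) (auto simp: c_def the_inv_into_f_f[OF inj_rep[OF J(1)]] cf)
      finally have "(\<Sum>v\<in>rep ` J. c v *s v) = 0" using s by simp
      then have "\<forall>v\<in>rep ` J. c v = 0" using I unfolding vec.independent_explicit by blast
      then have "\<forall>L\<in>J. w L = 0"
        by (auto simp: c_def the_inv_into_f_f[OF inj_rep[OF J(1)]] cf)
    }
    then show ?thesis using J by (auto simp: PG2_def)
  qed
qed


lemma rep_mem_point: "A \<in> PG2_points \<Longrightarrow> B \<in> PG2_points \<Longrightarrow> rep B \<in> A \<Longrightarrow> B = A"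
  by (metis pln_of_mem rep)

lemma rep_notin_span1: "A \<in> PG2_points \<Longrightarrow> B \<in> PG2_points \<Longrightarrow> A \<noteq> B \<Longrightarrow> rep B \<notin> vec.span {rep A}"
  by (metis pln_span rep(2) rep_mem_point)

lemma indep_rep2: "A \<in> PG2_points \<Longrightarrow> B \<in> PG2_points \<Longrightarrow> A \<noteq> B \<Longrightarrow> vec.independent {rep A, rep B}"
  apply (subst vec.independent_insert)
  using rep_notin_span1[of B A] rep(1)[of B] vec.span_base[of "rep A" "{rep B}"]
  by (auto simp: vec.dependent_single)

lemma indep_PG2_1: "A \<in> PG2_points \<Longrightarrow> indep PG2 {A}"
  by (subst indep_PG2_iff) (auto simp: rep(1))

lemma indep_PG2_2: "A \<in> PG2_points \<Longrightarrow> B \<in> PG2_points \<Longrightarrow> A \<noteq> B \<Longrightarrow> indep PG2 {A, B}"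
  by (subst indep_PG2_iff) (auto simp: indep_rep2)

lemma indep3:
  assumes "A \<in> PG2_points" "B \<in> PG2_points" "X \<in> PG2_points" "card {A, B, X} = 3"
  shows "indep PG2 {A, B, X} \<longleftrightarrow> rep X \<notin> vec.span {rep A, rep B}"
proof -
  have d: "A \<noteq> B" "A \<noteq> X" "B \<noteq> X" using assms(4)
    by (auto simp: card_insert_if split: if_splits)
  have "rep X \<noteq> rep A" "rep X \<noteq> rep B" using d assms by (metis rep(2))+
  then have "rep ` {A, B, X} = insert (rep X) {rep A, rep B}" by auto
  then have "indep PG2 {A, B, X} \<longleftrightarrow> vec.independent (insert (rep X) {rep A, rep B})"
    using assms by (subst indep_PG2_iff) auto
  also have "\<dots> \<longleftrightarrow> rep X \<notin> vec.span {rep A, rep B}"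
    using \<open>rep X \<noteq> rep A\<close> \<open>rep X \<noteq> rep B\<close> indep_rep2[OF assms(1,2) d(1)]
    by (subst vec.independent_insert) simp
  finally show ?thesis .
qed

lemma finite_points: "finite (S :: ('f::{field,finite} ^ 3) set set)"
  by (rule finite_subset[OF subset_UNIV]) simp

lemma G1:
  assumes "indep PG2 (J :: ('f::field ^ 3) set set)" shows "card J \<le> 3"
proof -
  have J: "J \<subseteq> PG2_points" "finite J" using assms by (auto simp: PG2_def)
  then have "vec.independent (rep ` J)" using assms indep_PG2_iff by blast
  then have "card (rep ` J) \<le> vec.dim (rep ` J)" using vec.independent_bound_general by blast
  also have "\<dots> \<le> 3" using dim_subset_UNIV_cart_gen[of "rep ` J"] by simp
  finally show ?thesis using card_image[OF inj_rep[OF J(1)]] by simp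
qed

lemma exists_out:
  assumes "finite (S :: ('f::field ^ 3) set)" "card S \<le> 2" shows "\<exists>z. z \<notin> vec.span S"
proof (rule ccontr)
  assume "\<not> ?thesis"
  then have "UNIV \<subseteq> vec.span S" by auto
  then have "vec.dim (UNIV :: ('f ^ 3) set) \<le> card S" using vec.dim_le_card assms(1) by blast
  then show False using vec_dim_card[where 'a='f and 'n=3] assms(2) by simp
qed


lemma G5:
  assumes A: "A \<in> PG2_points" and B: "B \<in> PG2_points" and AB: "A \<noteq> B"
  shows "CARD('f) ^ 2 \<le> card {X \<in> (PG2_points :: ('f::{field,finite} ^ 3) set set). card {A, B, X} = 3 \<and> indep PG2 {A, B, X}}"
proof -
  define a where "a = rep A"
  define b where "b = rep B"
  have ab: "vec.independent {a, b}" using indep_rep2[OF A B AB] by (simp add: a_def b_def)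
  have "a \<noteq> b" using A B AB a_def b_def by (metis rep(2))
  have "card {a, b} \<le> 2" by (cases "a = b") auto
  then obtain z where z: "z \<notin> vec.span {a, b}" using exists_out[of "{a,b}"] by auto
  define \<phi> where "\<phi> p = pln (z + fst p *s a + snd p *s b)" for p :: "'f \<times> 'f"
  have spab: "fst p *s a + snd p *s b \<in> vec.span {a, b}" for p
    by (intro vec.span_add vec.span_scale vec.span_base) auto
  have nz: "z + fst p *s a + snd p *s b \<noteq> 0" for p
  proof
    assume "z + fst p *s a + snd p *s b = 0"
    moreover have "z = (z + fst p *s a + snd p *s b) - (fst p *s a + snd p *s b)"
      by (simp add: add.assoc)
    ultimately have "z = 0 - (fst p *s a + snd p *s b)" by simp
    then show False using z vec.span_diff[OF vec.span_zero spab[of p]] by simp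
  qed
  have good: "\<phi> p \<in> {X \<in> PG2_points. card {A, B, X} = 3 \<and> indep PG2 {A, B, X}}" for p
  proof -
    have P: "\<phi> p \<in> PG2_points" using pln_in[OF nz] \<phi>_def by simp
    obtain k where k: "rep (\<phi> p) = k *s (z + fst p *s a + snd p *s b)"
      using rep_in[OF P] unfolding \<phi>_def pln_mem by blast
    have "k \<noteq> 0" using rep(1)[OF P] k by auto
    have out: "rep (\<phi> p) \<notin> vec.span {a, b}"
    proof
      assume "rep (\<phi> p) \<in> vec.span {a, b}"
      then have "inverse k *s rep (\<phi> p) \<in> vec.span {a, b}" by (rule vec.span_scale)
      then have "z + fst p *s a + snd p *s b \<in> vec.span {a, b}" using k \<open>k \<noteq> 0\<close>
        by (simp add: vector_smult_assoc)
      then have "(z + fst p *s a + snd p *s b) - (fst p *s a + snd p *s b) \<in> vec.span {a, b}"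
        using spab vec.span_diff by blast
      then show False using z by simp
    qed
    have "\<phi> p \<noteq> A" using out vec.span_base[of a "{a,b}"] a_def by auto
    moreover have "\<phi> p \<noteq> B" using out vec.span_base[of b "{a,b}"] b_def by auto
    ultimately have c3: "card {A, B, \<phi> p} = 3" using AB by auto
    show ?thesis using P c3 indep3[OF A B P c3] out a_def b_def by simp
  qed
  have inj: "inj \<phi>"
  proof (rule injI)
    fix p p' assume e: "\<phi> p = \<phi> p'"
    obtain s t where p: "p = (s, t)" by (cases p)
    obtain s' t' where p': "p' = (s', t')" by (cases p')
    have "z + s' *s a + t' *s b \<in> \<phi> p'" unfolding \<phi>_def p' by (simp add: pln_self)
    then have "z + s' *s a + t' *s b \<in> \<phi> p" using e by simp
    then obtain k where k: "z + s' *s a + t' *s b = k *s (z + s *s a + t *s b)"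
      unfolding \<phi>_def p pln_mem by auto
    have k1: "k = 1"
    proof (rule ccontr)
      assume "k \<noteq> 1"
      have "(1 - k) *s z = (k * s - s') *s a + (k * t - t') *s b"
      proof (subst vec_eq_iff, intro allI)
        fix i
        have "z$i + s' * a$i + t' * b$i = k * (z$i + s * a$i + t * b$i)"
          using arg_cong[OF k, of "\<lambda>v. v$i"] by simp
        then have "(1 - k) * z$i = (k * s - s') * a$i + (k * t - t') * b$i"
          by (simp add: algebra_simps)
        then show "((1 - k) *s z)$i = ((k * s - s') *s a + (k * t - t') *s b)$i"
          by simp
      qed
      then have "(1 - k) *s z \<in> vec.span {a, b}"
        using spab[of "(k * s - s', k * t - t')"] by simp
      then have "inverse (1 - k) *s ((1 - k) *s z) \<in> vec.span {a, b}" by (rule vec.span_scale)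
      then show False using z \<open>k \<noteq> 1\<close> by (simp add: vector_smult_assoc)
    qed
    then have "(s - s') *s a + (t - t') *s b = 0"
    proof (subst vec_eq_iff, intro allI)
      fix i
      have "z$i + s' * a$i + t' * b$i = 1 * (z$i + s * a$i + t * b$i)"
        using arg_cong[OF k, of "\<lambda>v. v$i"] k1 by simp
      then have "(s - s') * a$i + (t - t') * b$i = 0" by (simp add: algebra_simps)
      then show "((s - s') *s a + (t - t') *s b)$i = 0$i" by simp
    qed
    moreover have "(\<Sum>v\<in>{a,b}. (if v = a then s - s' else t - t') *s v) = (s - s') *s a + (t - t') *s b"
      using \<open>a \<noteq> b\<close> by simp
    moreover have H: "\<forall>c. (\<Sum>v\<in>{a,b}. c v *s v) = 0 \<longrightarrow> (\<forall>v\<in>{a,b}. c v = 0)"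
      using ab unfolding vec.independent_explicit by blast
    ultimately have S0: "(\<Sum>v\<in>{a,b}. (if v = a then s - s' else t - t') *s v) = 0"
      by simp
    have "\<forall>v\<in>{a,b}. (if v = a then s - s' else t - t') = 0"
      using spec[OF H, of "\<lambda>v. if v = a then s - s' else t - t'"] S0 by blast
    then have "s - s' = 0" "t - t' = 0" using \<open>a \<noteq> b\<close> by (simp, metis insertI1 insertI2)
    then show "p = p'" using p p' by simp
  qed
  have "CARD('f) ^ 2 = card (range \<phi>)"
    using card_image[OF inj] card_cartesian_product[of "UNIV :: 'f set" "UNIV :: 'f set"]
    by (simp add: power2_eq_square UNIV_Times_UNIV)
  also have "\<dots> \<le> card {X \<in> PG2_points. card {A, B, X} = 3 \<and> indep PG2 {A, B, X}}"
    by (rule card_mono[OF finite_points]) (use good in auto)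
  finally show ?thesis .
qed


lemma G3:
  assumes S: "S \<subseteq> (PG2_points :: ('f::{field,finite} ^ 3) set set)"
    and dep: "\<forall>T\<subseteq>S. card T = 3 \<longrightarrow> \<not> indep PG2 T"
  shows "card S \<le> CARD('f) + 1"
proof (cases "\<exists>A B. A \<in> S \<and> B \<in> S \<and> A \<noteq> B")
  case False
  then have "card S \<le> 1" using card_le_Suc0_iff_eq[of S] finite_points[of S] by auto
  then show ?thesis by simp
next
  case True
  then obtain A B where AB: "A \<in> S" "B \<in> S" "A \<noteq> B" by blast
  have A: "A \<in> PG2_points" and B: "B \<in> PG2_points" using AB S by auto
  define a where "a = rep A"
  define b where "b = rep B"
  have lnA: "pln a = A" using rep(2)[OF A] a_def by simp
  have lnB: "pln b = B" using rep(2)[OF B] b_def by simp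
  have key: "\<exists>k. X = pln (k *s a + b)" if X: "X \<in> S" "X \<noteq> A" for X
  proof (cases "X = B")
    case True then show ?thesis using lnB by (intro exI[of _ 0]) simp
  next
    case False
    have XP: "X \<in> PG2_points" using X S by auto
    have c3: "card {A, B, X} = 3" using AB X False by auto
    have "{A, B, X} \<subseteq> S" using AB X by auto
    then have "\<not> indep PG2 {A, B, X}" using dep c3 by blast
    then have "rep X \<in> vec.span {b, a}" using indep3[OF A B XP c3] a_def b_def by (simp add: insert_commute)
    then obtain t where "rep X - t *s b \<in> vec.span {a}" using vec.span_breakdown_eq by blast
    then obtain s where rX: "rep X - t *s b = s *s a" using vec.span_singleton by blast
    have "t \<noteq> 0"
    proof
      assume "t = 0"
      then have "rep X \<in> A" using rX lnA pln_mem by auto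
      then show False using rep_mem_point[OF A XP] X by simp
    qed
    have eq: "rep X = t *s ((s / t) *s a + b)"
    proof (subst vec_eq_iff, intro allI)
      fix i
      have "(rep X)$i - t * b$i = s * a$i" using arg_cong[OF rX, of "\<lambda>v. v$i"] by simp
      then show "(rep X)$i = (t *s ((s / t) *s a + b))$i" using \<open>t \<noteq> 0\<close>
        by (simp add: field_simps)
    qed
    have "rep X \<in> pln ((s / t) *s a + b)" unfolding pln_mem using eq by blast
    then have "pln (rep X) = pln ((s / t) *s a + b)" using rep(1)[OF XP] pln_of_mem by blast
    then show ?thesis using rep(2)[OF XP] by auto
  qed
  define \<kappa> where "\<kappa> X = (SOME k. X = pln (k *s a + b))" for X
  have \<kappa>: "X = pln (\<kappa> X *s a + b)" if "X \<in> S - {A}" for X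
  proof -
    have "\<exists>k. X = pln (k *s a + b)" using key[of X] that by auto
    then show ?thesis unfolding \<kappa>_def by (rule someI_ex)
  qed
  have "inj_on \<kappa> (S - {A})"
    by (rule inj_onI) (metis \<kappa>)
  then have "card (S - {A}) \<le> CARD('f)"
    by (rule card_inj_on_le) auto
  moreover have "card S = card (S - {A}) + 1"
    using AB finite_points[of S] card_Diff_singleton[of A S] card_gt_0_iff[of S] by auto
  ultimately show ?thesis by simp
qed

lemma G4:
  assumes A: "A \<in> PG2_points" and B: "B \<in> PG2_points" and C: "C \<in> PG2_points"
    and D: "D \<in> (PG2_points :: ('f::field ^ 3) set set)" and AB: "A \<noteq> B" and CD: "C \<noteq> D"
  shows "\<exists>X\<in>PG2_points. \<not> (card {A, B, X} = 3 \<and> indep PG2 {A, B, X}) \<and>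
                        \<not> (card {C, D, X} = 3 \<and> indep PG2 {C, D, X})"
proof -
  define a where "a = rep A"
  define b where "b = rep B"
  define c where "c = rep C"
  define d where "d = rep D"
  have ab: "vec.independent {a, b}" using indep_rep2[OF A B AB] a_def b_def by simp
  have "a \<noteq> b" using A B AB a_def b_def by (metis rep(2))
  obtain x where x: "x \<noteq> 0" "x \<in> vec.span {a, b}" "x \<in> vec.span {c, d}"
  proof (cases "c \<in> vec.span {a, b}")
    case True
    then show ?thesis using that[of c] rep(1)[OF C] c_def vec.span_base[of c "{c,d}"] by auto
  next
    case False
    have cn: "c \<notin> {a, b}" using False vec.span_base[of c "{a, b}"] by blast
    have i3: "vec.independent (insert c {a, b})"
      using ab False cn by (simp add: vec.independent_insert)
    have "d \<in> vec.span (insert c {a, b})"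
    proof (rule ccontr)
      assume nd: "d \<notin> vec.span (insert c {a, b})"
      then have "vec.independent (insert d (insert c {a, b}))" using i3 vec.independent_insertI by blast
      then have "card (insert d (insert c {a, b})) \<le> vec.dim (insert d (insert c {a, b}))"
        using vec.independent_bound_general by blast
      also have "\<dots> \<le> 3" using dim_subset_UNIV_cart_gen[of "insert d (insert c {a, b})"] by simp
      finally have le: "card (insert d (insert c {a, b})) \<le> 3" .
      have "d \<notin> insert c {a, b}" using nd vec.span_base[of d "insert c {a, b}"] by blast
      then have "card (insert d (insert c {a, b})) = 4" using cn \<open>a \<noteq> b\<close> by simp
      then show False using le by simp
    qed
    then obtain \<gamma> where g: "d - \<gamma> *s c \<in> vec.span {a, b}" using vec.span_breakdown_eq by blast
    have nz: "d - \<gamma> *s c \<noteq> 0"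
    proof
      assume "d - \<gamma> *s c = 0"
      then have "d = \<gamma> *s c" by (simp add: right_minus_eq)
      then have "d \<in> vec.span {c}" unfolding vec.span_singleton by blast
      then show False using rep_notin_span1[OF C D CD] c_def d_def by simp
    qed
    have "d - \<gamma> *s c \<in> vec.span {c, d}"
      by (intro vec.span_diff vec.span_scale vec.span_base) auto
    then show ?thesis using that nz g by blast
  qed
  define X where "X = pln x"
  have XP: "X \<in> PG2_points" using pln_in[OF x(1)] X_def by simp
  obtain k where k: "rep X = k *s x" using rep_in[OF XP] X_def pln_mem by blast
  have s1: "rep X \<in> vec.span {a, b}" using k x(2) vec.span_scale by simp
  have s2: "rep X \<in> vec.span {c, d}" using k x(3) vec.span_scale by simp
  have "\<not> (card {A, B, X} = 3 \<and> indep PG2 {A, B, X})"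
    using indep3[OF A B XP] s1 a_def b_def by blast
  moreover have "\<not> (card {C, D, X} = 3 \<and> indep PG2 {C, D, X})"
    using indep3[OF C D XP] s2 c_def d_def by blast
  ultimately show ?thesis using XP by blast
qed



locale mat = fixes M :: "'a matroid" assumes M: "matroid M"
begin

lemma finE: "finite (ground M)" using M by (simp add: matroid_def)
lemma indep_empty: "indep M {}" using M by (simp add: matroid_def)
lemma indep_sub: "indep M I \<Longrightarrow> I \<subseteq> ground M" using M by (simp add: matroid_def)
lemma indep_fin: "indep M I \<Longrightarrow> finite I" using indep_sub finE finite_subset by blast
lemma indep_mono: "indep M J \<Longrightarrow> I \<subseteq> J \<Longrightarrow> indep M I" using M unfolding matroid_def by blast
lemma aug: "indep M I \<Longrightarrow> indep M J \<Longrightarrow> card I < card J \<Longrightarrow> \<exists>x\<in>J - I. indep M (insert x I)"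
  using M unfolding matroid_def by blast

lemma fin_fam: "finite {I. I \<subseteq> X \<and> indep M I}"
  by (rule finite_subset[of _ "Pow (ground M)"]) (auto dest: indep_sub simp: finE)

lemma r_ge: "I \<subseteq> X \<Longrightarrow> indep M I \<Longrightarrow> card I \<le> mrank M X"
  unfolding mrank_def by (rule Max_ge) (use fin_fam in auto)

lemma r_obtain: "\<exists>I. I \<subseteq> X \<and> indep M I \<and> card I = mrank M X"
proof -
  have "mrank M X \<in> card ` {I. I \<subseteq> X \<and> indep M I}"
    unfolding mrank_def by (rule Max_in) (use fin_fam indep_empty in auto)
  then show ?thesis by auto
qed

lemma r_le_card: "finite X \<Longrightarrow> mrank M X \<le> card X"
proof -
  assume "finite X"
  obtain I where "I \<subseteq> X" "indep M I" "card I = mrank M X" using r_obtain by blast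
  then show ?thesis using card_mono[OF \<open>finite X\<close>] by metis
qed

lemma r_indep: "indep M I \<Longrightarrow> mrank M I = card I"
proof -
  assume "indep M I"
  then show ?thesis using r_ge[of I I] r_le_card[of I] indep_fin[of I] by simp
qed

lemma r_mono: "X \<subseteq> Y \<Longrightarrow> mrank M X \<le> mrank M Y"
proof -
  assume "X \<subseteq> Y"
  obtain I where "I \<subseteq> X" "indep M I" "card I = mrank M X" using r_obtain by blast
  then show ?thesis using r_ge[of I Y] \<open>X \<subseteq> Y\<close> by simp
qed

lemma extend:
  assumes "I \<subseteq> X" "indep M I"
  shows "\<exists>B. I \<subseteq> B \<and> B \<subseteq> X \<and> indep M B \<and> card B = mrank M X"
proof -
  define F where "F = {B. I \<subseteq> B \<and> B \<subseteq> X \<and> indep M B}"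
  have fF: "finite F" unfolding F_def by (rule finite_subset[OF _ fin_fam[of X]]) auto
  have "I \<in> F" using assms F_def by auto
  define m where "m = Max (card ` F)"
  have "m \<in> card ` F" unfolding m_def by (rule Max_in) (use fF \<open>I \<in> F\<close> in auto)
  then obtain B where B: "B \<in> F" "card B = m" by auto
  have mx: "card B' \<le> m" if "B' \<in> F" for B' unfolding m_def using fF that by simp
  have le: "card B \<le> mrank M X" using B r_ge unfolding F_def by auto
  have "\<not> card B < mrank M X"
  proof
    assume lt: "card B < mrank M X"
    obtain J where J: "J \<subseteq> X" "indep M J" "card J = mrank M X" using r_obtain by blast
    then obtain x where x: "x \<in> J - B" "indep M (insert x B)" using aug[of B J] B lt F_def by auto
    then have "insert x B \<in> F" using B J unfolding F_def by auto
    then have "card (insert x B) \<le> m" by (rule mx)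
    moreover have "card (insert x B) = card B + 1" using x B indep_fin unfolding F_def by auto
    ultimately show False using B by simp
  qed
  then show ?thesis using le B F_def by auto
qed

lemma submod: "mrank M (X \<union> Y) + mrank M (X \<inter> Y) \<le> mrank M X + mrank M Y"
proof -
  obtain I where I: "I \<subseteq> X \<inter> Y" "indep M I" "card I = mrank M (X \<inter> Y)" using r_obtain by blast
  obtain B where B: "I \<subseteq> B" "B \<subseteq> X \<union> Y" "indep M B" "card B = mrank M (X \<union> Y)"
    using extend[of I "X \<union> Y"] I by auto
  have fB: "finite B" using B indep_fin by auto
  have 1: "card (B \<inter> X) \<le> mrank M X" using r_ge indep_mono B by auto
  have 2: "card (B \<inter> Y) \<le> mrank M Y" using r_ge indep_mono B by auto
  have u: "(B \<inter> X) \<union> (B \<inter> Y) = B" using B by auto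
  have "card (B \<inter> X) + card (B \<inter> Y) = card B + card ((B \<inter> X) \<inter> (B \<inter> Y))"
    using card_Un_Int[of "B \<inter> X" "B \<inter> Y"] fB unfolding u by auto
  moreover have "card I \<le> card ((B \<inter> X) \<inter> (B \<inter> Y))"
    using I B fB by (intro card_mono) auto
  ultimately show ?thesis using 1 2 I B by linarith
qed

lemma r_Un_le: "mrank M (X \<union> Y) \<le> mrank M X + mrank M Y"
  using submod[of X Y] by linarith

lemma r_empty: "mrank M {} = 0" using r_le_card[of "{}"] by simp

lemma r_single: "mrank M {x} \<le> 1" using r_le_card[of "{x}"] by simp

lemma r_insert: "mrank M (insert x X) \<le> mrank M X + 1"
  using r_Un_le[of "{x}" X] r_single[of x] by simp

lemma r_closure:
  assumes "finite S" "\<forall>x\<in>S. mrank M (insert x A) = mrank M A"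
  shows "mrank M (A \<union> S) = mrank M A"
  using assms
proof (induction S rule: finite_induct)
  case empty then show ?case by simp
next
  case (insert x S)
  have ih: "mrank M (A \<union> S) = mrank M A" using insert by auto
  have hx: "mrank M (insert x A) = mrank M A" using insert by auto
  have u: "(A \<union> S) \<union> insert x A = A \<union> insert x S" by auto
  have "mrank M (A \<union> insert x S) + mrank M ((A \<union> S) \<inter> insert x A) \<le> mrank M (A \<union> S) + mrank M (insert x A)"
    using submod[of "A \<union> S" "insert x A"] unfolding u .
  moreover have "mrank M A \<le> mrank M ((A \<union> S) \<inter> insert x A)" by (rule r_mono) auto
  moreover have "mrank M A \<le> mrank M (A \<union> insert x S)" by (rule r_mono) auto
  ultimately show ?case using ih hx by linarith
qed

end



lemma G1b: "\<exists>J \<subseteq> (PG2_points :: ('f::{field,finite} ^ 3) set set). card J = 3 \<and> indep PG2 J"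
proof -
  obtain z1 :: "'f ^ 3" where z1: "z1 \<notin> vec.span {}" using exists_out[of "{}"] by auto
  have "z1 \<noteq> 0" using z1 vec.span_zero by auto
  define A where "A = pln z1"
  have A: "A \<in> PG2_points" using pln_in[OF \<open>z1 \<noteq> 0\<close>] A_def by simp
  obtain z2 :: "'f ^ 3" where z2: "z2 \<notin> vec.span {rep A}" using exists_out[of "{rep A}"] by auto
  have "z2 \<noteq> 0" using z2 vec.span_zero by auto
  define B where "B = pln z2"
  have B: "B \<in> PG2_points" using pln_in[OF \<open>z2 \<noteq> 0\<close>] B_def by simp
  have "A \<noteq> B"
  proof
    assume "A = B"
    then have "z2 \<in> A" using B_def pln_self by simp
    then show False using z2 rep(2)[OF A] pln_span by auto
  qed
  have "CARD('f) ^ 2 \<le> card {X \<in> (PG2_points :: ('f ^ 3) set set). card {A, B, X} = 3 \<and> indep PG2 {A, B, X}}"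
    by (rule G5[OF A B \<open>A \<noteq> B\<close>])
  moreover have "0 < CARD('f) ^ 2" by simp
  ultimately have "{X \<in> (PG2_points :: ('f ^ 3) set set). card {A, B, X} = 3 \<and> indep PG2 {A, B, X}} \<noteq> {}"
    by (metis card.empty not_le)
  then obtain X where X: "X \<in> PG2_points" "card {A, B, X} = 3" "indep PG2 {A, B, X}" by blast
  then show ?thesis using A B by (intro exI[of _ "{A, B, X}"]) auto
qed

context mat
begin

lemma r3_iff: "mrank M {a, b, x} = 3 \<longleftrightarrow> card {a, b, x} = 3 \<and> indep M {a, b, x}"
proof
  assume h: "mrank M {a, b, x} = 3"
  obtain I where I: "I \<subseteq> {a, b, x}" "indep M I" "card I = mrank M {a, b, x}" using r_obtain by blast
  have le: "card {a, b, x} \<le> 3" by (simp add: card_insert_le_m1)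
  have "card I \<le> card {a, b, x}" using I(1) by (intro card_mono) auto
  then have "card {a, b, x} = 3" using le I h by simp
  moreover have "I = {a, b, x}" using I h calculation by (intro card_subset_eq) auto
  ultimately show "card {a, b, x} = 3 \<and> indep M {a, b, x}" using I by simp
next
  assume "card {a, b, x} = 3 \<and> indep M {a, b, x}"
  then show "mrank M {a, b, x} = 3" using r_indep by simp
qed

lemma r_ge3: "3 \<le> mrank M S \<Longrightarrow> \<exists>I\<subseteq>S. card I = 3 \<and> indep M I"
proof -
  assume "3 \<le> mrank M S"
  obtain J where J: "J \<subseteq> S" "indep M J" "card J = mrank M S" using r_obtain by blast
  have "3 \<le> card J" using J \<open>3 \<le> mrank M S\<close> by simp
  then obtain I where "I \<subseteq> J" "card I = 3" by (meson obtain_subset_with_card_n)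
  then show ?thesis using J indep_mono by blast
qed

lemma sub_le:
  assumes "mrank M A \<le> k" "mrank M B \<le> k" "Z \<subseteq> A \<inter> B" "k \<le> mrank M Z"
  shows "mrank M (A \<union> B) \<le> k"
  using submod[of A B] r_mono[OF assms(3)] assms by linarith

end

lemma mrank_restrict: "Y \<subseteq> X \<Longrightarrow> mrank (restrict M X) Y = mrank M Y"
proof -
  assume "Y \<subseteq> X"
  then have "{I. I \<subseteq> Y \<and> indep (restrict M X) I} = {I. I \<subseteq> Y \<and> indep M I}"
    by (auto simp: restrict_def)
  then show ?thesis unfolding mrank_def by simp
qed


locale matPG = mat M for M :: "'a matroid" +
  fixes P :: "'a set" and g :: "'a \<Rightarrow> ('f::{field,finite} ^ 3) set"
  assumes P: "P \<subseteq> ground M" and g: "bij_betw g P PG2_points"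
    and gi: "\<And>I. I \<subseteq> P \<Longrightarrow> indep M I \<longleftrightarrow> indep PG2 (g ` I)"
begin

lemma ginj: "inj_on g P" using g by (simp add: bij_betw_def)
lemma gimg: "g ` P = PG2_points" using g by (simp add: bij_betw_def)
lemma gpt: "x \<in> P \<Longrightarrow> g x \<in> PG2_points" using gimg by (rule equalityD1[THEN subsetD, OF _ imageI])
lemma gcard: "I \<subseteq> P \<Longrightarrow> card (g ` I) = card I" by (rule card_image[OF inj_on_subset[OF ginj]])

lemma PF2': "a \<in> P \<Longrightarrow> mrank M {a} = 1"
  using gi[of "{a}"] indep_PG2_1[OF gpt[of a]] r_indep by simp

lemma PF2: "a \<in> P \<Longrightarrow> b \<in> P \<Longrightarrow> a \<noteq> b \<Longrightarrow> mrank M {a, b} = 2"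
proof -
  assume ab: "a \<in> P" "b \<in> P" "a \<noteq> b"
  then have "g a \<noteq> g b" using ginj by (meson inj_on_contraD)
  then have "indep M {a, b}" using gi[of "{a, b}"] indep_PG2_2[OF gpt gpt] ab by simp
  then show ?thesis using r_indep ab by simp
qed

lemma PF1: "mrank M P = 3"
proof -
  obtain I where I: "I \<subseteq> P" "indep M I" "card I = mrank M P" using r_obtain by blast
  have "card (g ` I) \<le> 3" using gi[OF I(1)] I(2) G1 by blast
  then have le: "mrank M P \<le> 3" using gcard[OF I(1)] I(3) by simp
  obtain J where J: "J \<subseteq> (PG2_points :: ('f ^ 3) set set)" "card J = 3" "indep PG2 J" using G1b by blast
  then obtain K where K: "K \<subseteq> P" "J = g ` K" using gimg by (metis subset_image_iff)
  have "indep M K" using gi[OF K(1)] K J by simp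
  moreover have "card K = 3" using gcard[OF K(1)] K J by simp
  ultimately have "3 \<le> mrank M P" using r_ge[OF K(1)] by simp
  then show ?thesis using le by simp
qed

lemma PF3: "S \<subseteq> P \<Longrightarrow> mrank M S \<le> 2 \<Longrightarrow> card S \<le> CARD('f) + 1"
proof -
  assume S: "S \<subseteq> P" "mrank M S \<le> 2"
  have "\<forall>T\<subseteq>g ` S. card T = 3 \<longrightarrow> \<not> indep PG2 T"
  proof (intro allI impI)
    fix T assume T: "T \<subseteq> g ` S" "card T = 3"
    then obtain I where I: "I \<subseteq> S" "T = g ` I" by (meson subset_image_iff)
    show "\<not> indep PG2 T"
    proof
      assume "indep PG2 T"
      then have "indep M I" using gi[of I] I S by auto
      moreover have "card I = 3" using gcard[of I] I S T by auto
      ultimately have "3 \<le> mrank M S" using r_ge[OF I(1)] by simp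
      then show False using S by simp
    qed
  qed
  then have "card (g ` S) \<le> CARD('f) + 1" using G3[of "g ` S"] gimg S by blast
  then show ?thesis using gcard[OF S(1)] by simp
qed

lemma PF4:
  assumes "a \<in> P" "b \<in> P" "c \<in> P" "d \<in> P" "a \<noteq> b" "c \<noteq> d"
  shows "\<exists>x\<in>P. mrank M {a, b, x} \<le> 2 \<and> mrank M {c, d, x} \<le> 2"
proof -
  have ne: "g a \<noteq> g b" "g c \<noteq> g d" using assms ginj by (meson inj_on_contraD)+
  obtain X where X: "X \<in> PG2_points" "\<not> (card {g a, g b, X} = 3 \<and> indep PG2 {g a, g b, X})"
      "\<not> (card {g c, g d, X} = 3 \<and> indep PG2 {g c, g d, X})"
    using G4[OF gpt gpt gpt gpt ne] assms by blast
  then obtain x where x: "x \<in> P" "X = g x" using gimg by blast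
  have 1: "mrank M {a, b, x} \<le> 2"
  proof (rule ccontr)
    assume "\<not> ?thesis"
    moreover have "card {a, b, x} \<le> 3" by (simp add: card_insert_le_m1)
    then have "mrank M {a, b, x} \<le> 3" using r_le_card[of "{a,b,x}"] by simp
    ultimately have "mrank M {a, b, x} = 3" by simp
    then have "card {a, b, x} = 3" "indep M {a, b, x}" using r3_iff by auto
    then have "card {g a, g b, X} = 3" "indep PG2 {g a, g b, X}"
      using gcard[of "{a,b,x}"] gi[of "{a,b,x}"] assms x by auto
    then show False using X by blast
  qed
  have 2: "mrank M {c, d, x} \<le> 2"
  proof (rule ccontr)
    assume "\<not> ?thesis"
    moreover have "card {c, d, x} \<le> 3" by (simp add: card_insert_le_m1)
    then have "mrank M {c, d, x} \<le> 3" using r_le_card[of "{c,d,x}"] by simp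
    ultimately have "mrank M {c, d, x} = 3" by simp
    then have "card {c, d, x} = 3" "indep M {c, d, x}" using r3_iff by auto
    then have "card {g c, g d, X} = 3" "indep PG2 {g c, g d, X}"
      using gcard[of "{c,d,x}"] gi[of "{c,d,x}"] assms x by auto
    then show False using X by blast
  qed
  show ?thesis using 1 2 x by blast
qed

lemma PF5:
  assumes "a \<in> P" "b \<in> P" "a \<noteq> b"
  shows "CARD('f) ^ 2 \<le> card {x \<in> P. mrank M {a, b, x} = 3}"
proof -
  have ne: "g a \<noteq> g b" using assms ginj by (meson inj_on_contraD)
  have eq: "{X \<in> PG2_points. card {g a, g b, X} = 3 \<and> indep PG2 {g a, g b, X}} = g ` {x \<in> P. mrank M {a, b, x} = 3}"
  proof -
    have "mrank M {a, b, x} = 3 \<longleftrightarrow> card {g a, g b, g x} = 3 \<and> indep PG2 {g a, g b, g x}" if "x \<in> P" for x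
      using r3_iff[of a b x] gcard[of "{a,b,x}"] gi[of "{a,b,x}"] assms that by auto
    note h = this
    show ?thesis
    proof (intro equalityI subsetI)
      fix X assume X: "X \<in> {X \<in> PG2_points. card {g a, g b, X} = 3 \<and> indep PG2 {g a, g b, X}}"
      then obtain x where x: "x \<in> P" "X = g x" using gimg by (metis (no_types, lifting) imageE mem_Collect_eq)
      then show "X \<in> g ` {x \<in> P. mrank M {a, b, x} = 3}" using X h[OF x(1)] by auto
    next
      fix X assume "X \<in> g ` {x \<in> P. mrank M {a, b, x} = 3}"
      then show "X \<in> {X \<in> PG2_points. card {g a, g b, X} = 3 \<and> indep PG2 {g a, g b, X}}"
        using h gpt by auto
    qed
  qed
  have "card (g ` {x \<in> P. mrank M {a, b, x} = 3}) = card {x \<in> P. mrank M {a, b, x} = 3}"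
    by (rule gcard) auto
  then show ?thesis using G5[OF gpt gpt ne] assms eq by simp
qed


lemma skew:
  assumes "S \<subseteq> Q" "mrank M (Q \<union> C) = mrank M Q + mrank M C"
  shows "mrank M (S \<union> C) = mrank M S + mrank M C"
proof -
  have "mrank M ((S \<union> C) \<union> Q) + mrank M ((S \<union> C) \<inter> Q) \<le> mrank M (S \<union> C) + mrank M Q"
    by (rule submod)
  moreover have "(S \<union> C) \<union> Q = Q \<union> C" using assms by auto
  moreover have "mrank M S \<le> mrank M ((S \<union> C) \<inter> Q)" using assms by (intro r_mono) auto
  ultimately have "mrank M S + mrank M C \<le> mrank M (S \<union> C)" using assms by simp
  then show ?thesis using r_Un_le[of S C] by simp
qed

lemma main:
  assumes round: "round_matroid M"
    and LE: "L \<subseteq> ground M" and Lc: "card L = CARD('f) + 2"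
    and Li: "\<And>I. I \<subseteq> L \<Longrightarrow> indep M I \<longleftrightarrow> card I \<le> 2"
  shows "\<exists>C R. C \<subseteq> ground M \<and> R \<subseteq> ground M \<and> R \<inter> C = {} \<and> card R = CARD('f) ^ 2 + 1 \<and>
           (\<forall>I\<subseteq>R. mrank M (I \<union> C) = card I + mrank M C \<longleftrightarrow> card I \<le> 2)"
proof -
  define q where "q = CARD('f)"
  have finL: "finite L" using LE finE finite_subset by blast
  have finP: "finite P" using P finE finite_subset by blast
  have L2: "mrank M {e, f} = 2" if "e \<in> L" "f \<in> L" "e \<noteq> f" for e f
    using Li[of "{e,f}"] that r_indep[of "{e,f}"] by simp
  have L1: "mrank M {e} = 1" if "e \<in> L" for e
    using Li[of "{e}"] that r_indep[of "{e}"] by simp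
  have rL: "mrank M L = 2"
  proof -
    obtain I where I: "I \<subseteq> L" "indep M I" "card I = mrank M L" using r_obtain by blast
    have le: "mrank M L \<le> 2" using Li[OF I(1)] I by simp
    have "2 \<le> card L" using Lc by simp
    then obtain J where J: "J \<subseteq> L" "card J = 2" by (meson obtain_subset_with_card_n)
    then have "indep M J" using Li by simp
    then have "2 \<le> mrank M L" using r_ge[OF J(1)] J by simp
    then show ?thesis using le by simp
  qed
  have rP: "mrank M P = 3" by (rule PF1)
  define Fam where "Fam = {C. C \<subseteq> ground M \<and> mrank M (P \<union> C) = mrank M P + mrank M C \<and>
                                 mrank M (L \<union> C) = mrank M L + mrank M C}"
  have finFam: "finite Fam" unfolding Fam_def by (rule finite_subset[of _ "Pow (ground M)"]) (auto simp: finE)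
  have "{} \<in> Fam" unfolding Fam_def using r_empty by simp
  define m where "m = Max (card ` Fam)"
  have "m \<in> card ` Fam" unfolding m_def by (rule Max_in) (use finFam \<open>{} \<in> Fam\<close> in auto)
  then obtain C where C: "C \<in> Fam" "card C = m" by auto
  have Cmax: "card C' \<le> card C" if "C' \<in> Fam" for C'
    using C(2) finFam that unfolding m_def by simp
  have CE: "C \<subseteq> ground M" and skP0: "mrank M (P \<union> C) = 3 + mrank M C"
    and skL0: "mrank M (L \<union> C) = 2 + mrank M C" using C rP rL unfolding Fam_def by auto
  have finC: "finite C" using CE finE finite_subset by blast
  have cl: "mrank M (insert x (P \<union> C)) = mrank M (P \<union> C) \<or> mrank M (insert x (L \<union> C)) = mrank M (L \<union> C)"
    if x: "x \<in> ground M" for x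
  proof (rule ccontr)
    assume n: "\<not> ?thesis"
    have xC: "x \<notin> C"
    proof
      assume "x \<in> C"
      then have "insert x (P \<union> C) = P \<union> C" by auto
      then show False using n by simp
    qed
    have a1: "mrank M (insert x (P \<union> C)) = mrank M (P \<union> C) + 1"
      using n r_insert[of x "P \<union> C"] r_mono[OF subset_insertI, of "P \<union> C" x] by auto
    have a2: "mrank M (insert x (L \<union> C)) = mrank M (L \<union> C) + 1"
      using n r_insert[of x "L \<union> C"] r_mono[OF subset_insertI, of "L \<union> C" x] by auto
    have e1: "P \<union> insert x C = insert x (P \<union> C)" by auto
    have e2: "L \<union> insert x C = insert x (L \<union> C)" by auto
    have i1: "mrank M (insert x C) \<le> mrank M C + 1" by (rule r_insert)
    have "insert x C \<in> Fam"
      unfolding Fam_def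
    proof (intro CollectI conjI)
      show "insert x C \<subseteq> ground M" using x CE by auto
      show "mrank M (P \<union> insert x C) = mrank M P + mrank M (insert x C)"
        using a1 skP0 rP i1 r_Un_le[of P "insert x C"] unfolding e1 by linarith
      show "mrank M (L \<union> insert x C) = mrank M L + mrank M (insert x C)"
        using a2 skL0 rL i1 r_Un_le[of L "insert x C"] unfolding e2 by linarith
    qed
    then have "card (insert x C) \<le> card C" by (rule Cmax)
    then show False using xC finC by simp
  qed
  define X where "X = {x \<in> ground M. mrank M (insert x (P \<union> C)) = mrank M (P \<union> C)}"
  define Y where "Y = ground M - X"
  have finX: "finite X" using finE X_def by simp
  have finY: "finite Y" using finE Y_def by simp
  have rX: "mrank M X \<le> mrank M (P \<union> C)"
  proof -
    have "mrank M ((P \<union> C) \<union> X) = mrank M (P \<union> C)" using finX by (intro r_closure) (auto simp: X_def)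
    then show ?thesis using r_mono[of X "(P \<union> C) \<union> X"] by simp
  qed
  have rY: "mrank M Y \<le> mrank M (L \<union> C)"
  proof -
    have "\<forall>y\<in>Y. mrank M (insert y (L \<union> C)) = mrank M (L \<union> C)" using cl unfolding Y_def X_def by auto
    then have "mrank M ((L \<union> C) \<union> Y) = mrank M (L \<union> C)" using finY by (intro r_closure) auto
    then show ?thesis using r_mono[of Y "(L \<union> C) \<union> Y"] by simp
  qed
  have XY: "X \<union> Y = ground M" "X \<inter> Y = {}" unfolding X_def Y_def by auto
  have nr: "\<not> (mrank M X < mrank M (ground M) \<and> mrank M Y < mrank M (ground M))"
    using round XY unfolding round_matroid_def matroid_rank_def by blast
  have PCE: "P \<union> C \<subseteq> ground M" using P CE by auto
  have rPCE: "mrank M (P \<union> C) = mrank M (ground M)"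
  proof -
    have le: "mrank M (P \<union> C) \<le> mrank M (ground M)" by (rule r_mono[OF PCE])
    have "\<not> mrank M (ground M) \<le> mrank M Y" using rY skL0 skP0 le by linarith
    then show ?thesis using nr rX le by linarith
  qed
  have Pcl: "mrank M (insert x (P \<union> C)) = mrank M (P \<union> C)" if "x \<in> ground M" for x
    using r_mono[of "insert x (P \<union> C)" "ground M"] r_mono[OF subset_insertI, of "P \<union> C" x] rPCE PCE that
    by auto
  have skewP: "mrank M (S \<union> C) = mrank M S + mrank M C" if "S \<subseteq> P" for S
    using skew[OF that] skP0 rP by simp
  have skewL: "mrank M (S \<union> C) = mrank M S + mrank M C" if "S \<subseteq> L" for S
    using skew[OF that] skL0 rL by simp
  have P1C: "mrank M ({p} \<union> C) = 1 + mrank M C" if "p \<in> P" for p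
    using skewP[of "{p}"] PF2'[OF that] that by simp
  have L1C: "mrank M ({e} \<union> C) = 1 + mrank M C" if "e \<in> L" for e
    using skewL[of "{e}"] L1[OF that] that by simp
  have "\<exists>e\<in>L. \<forall>p\<in>P. mrank M ({e, p} \<union> C) = 2 + mrank M C"
  proof (rule ccontr)
    assume "\<not> ?thesis"
    then have "\<forall>e\<in>L. \<exists>p. p \<in> P \<and> mrank M ({e, p} \<union> C) \<noteq> 2 + mrank M C" by blast
    then obtain f where f: "\<And>e. e \<in> L \<Longrightarrow> f e \<in> P \<and> mrank M ({e, f e} \<union> C) \<noteq> 2 + mrank M C"
      by metis
    have fpar: "mrank M ({e, f e} \<union> C) = 1 + mrank M C" if e: "e \<in> L" for e
    proof -
      have "mrank M ({e} \<union> C) \<le> mrank M ({e, f e} \<union> C)" by (rule r_mono) auto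
      moreover have "mrank M (insert e ({f e} \<union> C)) \<le> mrank M ({f e} \<union> C) + 1" by (rule r_insert)
      moreover have "insert e ({f e} \<union> C) = {e, f e} \<union> C" by auto
      ultimately show ?thesis using L1C[OF e] P1C[of "f e"] f[OF e] by auto
    qed
    have finj: "inj_on f L"
    proof (rule inj_onI, rule ccontr)
      fix e e' assume e: "e \<in> L" "e' \<in> L" "f e = f e'" "e \<noteq> e'"
      have A1: "mrank M ({e, f e} \<union> C) \<le> 1 + mrank M C" using fpar[OF e(1)] by simp
      have A2: "mrank M ({e', f e} \<union> C) \<le> 1 + mrank M C" using fpar[OF e(2)] e(3) by simp
      have Z: "1 + mrank M C \<le> mrank M ({f e} \<union> C)" using P1C[of "f e"] f[OF e(1)] by simp
      have "mrank M (({e, f e} \<union> C) \<union> ({e', f e} \<union> C)) \<le> 1 + mrank M C"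
        by (rule sub_le[OF A1 A2 _ Z]) auto
      moreover have "mrank M ({e, e'} \<union> C) \<le> mrank M (({e, f e} \<union> C) \<union> ({e', f e} \<union> C))"
        by (rule r_mono) auto
      moreover have "mrank M ({e, e'} \<union> C) = 2 + mrank M C"
        using skewL[of "{e,e'}"] L2[OF e(1,2,4)] e by simp
      ultimately show False by simp
    qed
    have fcl: "mrank M (insert p (L \<union> C)) = mrank M (L \<union> C)" if pL: "p \<in> f ` L" for p
    proof -
      obtain e where e: "e \<in> L" "p = f e" using pL by blast
      have "mrank M ((L \<union> C) \<union> ({e, p} \<union> C)) + mrank M ((L \<union> C) \<inter> ({e, p} \<union> C)) \<le> mrank M (L \<union> C) + mrank M ({e, p} \<union> C)"
        by (rule submod)
      moreover have "(L \<union> C) \<union> ({e, p} \<union> C) = insert p (L \<union> C)" using e by auto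
      moreover have "mrank M ({e} \<union> C) \<le> mrank M ((L \<union> C) \<inter> ({e, p} \<union> C))" using e by (intro r_mono) auto
      ultimately have "mrank M (insert p (L \<union> C)) \<le> mrank M (L \<union> C)"
        using L1C[OF e(1)] fpar[OF e(1)] e by simp
      then show ?thesis using r_mono[OF subset_insertI, of "L \<union> C" p] by auto
    qed
    have "mrank M ((L \<union> C) \<union> f ` L) = mrank M (L \<union> C)"
      using finL fcl by (intro r_closure) auto
    moreover have "mrank M (f ` L \<union> C) \<le> mrank M ((L \<union> C) \<union> f ` L)" by (rule r_mono) auto
    moreover have fLP: "f ` L \<subseteq> P" using f by auto
    ultimately have "mrank M (f ` L) \<le> 2" using skewP[OF fLP] skL0 by simp
    then have "card (f ` L) \<le> CARD('f) + 1" using PF3[OF fLP] by simp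
    moreover have "card (f ` L) = card L" using card_image[OF finj] .
    ultimately show False using Lc by simp
  qed
  then obtain e where eL: "e \<in> L" and ep: "\<And>p. p \<in> P \<Longrightarrow> mrank M ({e, p} \<union> C) = 2 + mrank M C"
    by blast
  have eE: "e \<in> ground M" using eL LE by auto
  define bad where "bad c d \<longleftrightarrow> c \<in> P \<and> d \<in> P \<and> c \<noteq> d \<and> mrank M ({c, d, e} \<union> C) \<le> 2 + mrank M C" for c d
  obtain a b where ab: "a \<in> P" "b \<in> P" "a \<noteq> b"
    and badl: "\<And>c d. bad c d \<Longrightarrow> mrank M {a, b, c} \<le> 2 \<and> mrank M {a, b, d} \<le> 2"
  proof (cases "\<exists>c d. bad c d")
    case True
    then obtain a b where bab: "bad a b" by blast
    then have ab: "a \<in> P" "b \<in> P" "a \<noteq> b" unfolding bad_def by auto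
    show ?thesis
    proof (rule that[OF ab])
      fix c d assume bcd: "bad c d"
      then have cd: "c \<in> P" "d \<in> P" "c \<noteq> d" unfolding bad_def by auto
      obtain x where x: "x \<in> P" "mrank M {a, b, x} \<le> 2" "mrank M {c, d, x} \<le> 2"
        using PF4[OF ab(1,2) cd(1,2) ab(3) cd(3)] by blast
      have h1: "mrank M ({a, b, x} \<union> C) \<le> 2 + mrank M C" using skewP[of "{a,b,x}"] x ab by simp
      have h2: "mrank M ({a, b, e} \<union> C) \<le> 2 + mrank M C" using bab unfolding bad_def by simp
      have z1: "2 + mrank M C \<le> mrank M ({a, b} \<union> C)" using skewP[of "{a,b}"] PF2[OF ab] ab by simp
      have h3: "mrank M (({a, b, x} \<union> C) \<union> ({a, b, e} \<union> C)) \<le> 2 + mrank M C"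
        by (rule sub_le[OF h1 h2 _ z1]) auto
      have g1: "mrank M ({c, d, x} \<union> C) \<le> 2 + mrank M C" using skewP[of "{c,d,x}"] x cd by simp
      have g2: "mrank M ({c, d, e} \<union> C) \<le> 2 + mrank M C" using bcd unfolding bad_def by simp
      have z2: "2 + mrank M C \<le> mrank M ({c, d} \<union> C)" using skewP[of "{c,d}"] PF2[OF cd] cd by simp
      have h4: "mrank M (({c, d, x} \<union> C) \<union> ({c, d, e} \<union> C)) \<le> 2 + mrank M C"
        by (rule sub_le[OF g1 g2 _ z2]) auto
      have z3: "2 + mrank M C \<le> mrank M ({e, x} \<union> C)" using ep[OF x(1)] by simp
      have h5: "mrank M ((({a, b, x} \<union> C) \<union> ({a, b, e} \<union> C)) \<union> (({c, d, x} \<union> C) \<union> ({c, d, e} \<union> C))) \<le> 2 + mrank M C"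
        by (rule sub_le[OF h3 h4 _ z3]) auto
      have "mrank M ({a, b, c, d} \<union> C) \<le> 2 + mrank M C"
      proof -
        have sub: "{a, b, c, d} \<union> C \<subseteq> (({a, b, x} \<union> C) \<union> ({a, b, e} \<union> C)) \<union> (({c, d, x} \<union> C) \<union> ({c, d, e} \<union> C))"
          by auto
        show ?thesis by (rule le_trans[OF r_mono[OF sub] h5])
      qed
      then have "mrank M {a, b, c, d} \<le> 2" using skewP[of "{a,b,c,d}"] ab cd by simp
      then show "mrank M {a, b, c} \<le> 2 \<and> mrank M {a, b, d} \<le> 2"
        using r_mono[of "{a,b,c}" "{a,b,c,d}"] r_mono[of "{a,b,d}" "{a,b,c,d}"] by auto
    qed
  next
    case False
    obtain I where I: "I \<subseteq> P" "card I = 3" using r_ge3[of P] rP by auto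
    then obtain a b c where abc: "I = {a, b, c}" "a \<noteq> b" by (auto simp: card_3_iff)
    show ?thesis using that[of a b] False I abc by auto
  qed
  define G where "G = {x \<in> P. mrank M {a, b, x} = 3}"
  have cG: "CARD('f) ^ 2 \<le> card G" unfolding G_def by (rule PF5[OF ab])
  obtain G' where G': "G' \<subseteq> G" "card G' = CARD('f) ^ 2" "finite G'"
    by (rule obtain_subset_with_card_n[OF cG])
  have GP: "G \<subseteq> P" unfolding G_def by auto
  have finG': "finite G'" by (rule G'(3))
  have aG: "a \<notin> G"
  proof
    assume "a \<in> G"
    then have "mrank M {a, b, a} = 3" unfolding G_def by simp
    moreover have "{a, b, a} = {a, b}" by auto
    ultimately show False using PF2[OF ab] by simp
  qed
  define R where "R = insert a G'"
  have RP: "R \<subseteq> P" using R_def G' GP ab by auto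
  have "a \<notin> G'" using aG G' by auto
  then have cardR: "card R = CARD('f) ^ 2 + 1" using R_def finG' G' by simp
  define C' where "C' = insert e C"
  have notbad: "\<not> bad c d" if "c \<in> R" "d \<in> R" "c \<noteq> d" for c d
  proof
    assume "bad c d"
    then have "mrank M {a, b, c} \<le> 2" "mrank M {a, b, d} \<le> 2" using badl by auto
    moreover have "c \<in> G \<or> d \<in> G" using that R_def G' by auto
    ultimately show False unfolding G_def by auto
  qed
  have eC: "e \<notin> C"
  proof
    assume "e \<in> C"
    then have "{e} \<union> C = C" by auto
    then show False using L1C[OF eL] by simp
  qed
  have rC': "mrank M C' = 1 + mrank M C" using L1C[OF eL] unfolding C'_def by simp
  have bound: "mrank M (I \<union> C') \<le> 3 + mrank M C" if "I \<subseteq> P" for I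
  proof -
    have "mrank M (I \<union> C') \<le> mrank M (insert e (P \<union> C))" using that unfolding C'_def by (intro r_mono) auto
    then show ?thesis using Pcl[OF eE] skP0 by simp
  qed
  have RC: "R \<inter> C' = {}"
  proof (rule ccontr)
    assume "R \<inter> C' \<noteq> {}"
    then obtain p where p: "p \<in> R" "p \<in> C'" by blast
    then have pP: "p \<in> P" using RP by auto
    show False
    proof (cases "p = e")
      case True
      then have "{e, p} = {e}" by auto
      then show False using ep[OF pP] L1C[OF eL] by simp
    next
      case False
      then have "p \<in> C" using p C'_def by auto
      then have "{p} \<union> C = C" by auto
      then show False using P1C[OF pP] by simp
    qed
  qed
  have rank: "mrank M (I \<union> C') = card I + mrank M C' \<longleftrightarrow> card I \<le> 2" if IR: "I \<subseteq> R" for I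
  proof -
    have IP: "I \<subseteq> P" using IR RP by auto
    have finI: "finite I" by (rule finite_subset[OF IP finP])
    consider "card I = 0" | "card I = 1" | "card I = 2" | "3 \<le> card I" by linarith
    then show ?thesis
    proof cases
      case 1
      then have "I = {}" using finI by simp
      then show ?thesis by simp
    next
      case 2
      then obtain p where p: "I = {p}" by (rule card_1_singletonE)
      have "{p} \<union> C' = {e, p} \<union> C" unfolding C'_def by auto
      then show ?thesis using ep[of p] p IP rC' by simp
    next
      case 3
      then obtain c d where cd: "I = {c, d}" "c \<noteq> d" by (auto simp: card_2_iff)
      have "\<not> bad c d" using notbad cd IR by auto
      then have gt: "2 + mrank M C < mrank M ({c, d, e} \<union> C)" using cd IP unfolding bad_def by auto
      have "{c, d} \<union> C' = {c, d, e} \<union> C" unfolding C'_def by auto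
      then have "mrank M (I \<union> C') = 3 + mrank M C" using gt bound[OF IP] cd by simp
      then show ?thesis using 3 rC' by simp
    next
      case 4
      then show ?thesis using bound[OF IP] rC' by simp
    qed
  qed
  show ?thesis
  proof (intro exI conjI)
    show "C' \<subseteq> ground M" using CE eE C'_def by auto
    show "R \<subseteq> ground M" using RP P by auto
    show "R \<inter> C' = {}" by (rule RC)
    show "card R = CARD('f) ^ 2 + 1" by (rule cardR)
    show "\<forall>I\<subseteq>R. mrank M (I \<union> C') = card I + mrank M C' \<longleftrightarrow> card I \<le> 2" using rank by blast
  qed
qed

end


theorem lemma2p2:
  fixes M :: "'a matroid"
  assumes "matroid M"
    and "round_matroid M"
    and "has_restriction M (uniform 2 (CARD('f::{field,finite}) + 2))"
    and "has_restriction M (PG2 :: ('f ^ 3) set matroid)"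
  shows "has_minor M (uniform 2 (CARD('f) ^ 2 + 1))"
proof -
  interpret mat M by (rule mat.intro) (fact assms(1))
  obtain L f where LE: "L \<subseteq> ground M" and f: "bij_betw f L {0..<CARD('f) + 2}"
    and fi: "\<forall>I. I \<subseteq> L \<longrightarrow> (indep M I \<and> I \<subseteq> L \<longleftrightarrow> f ` I \<subseteq> {0..<CARD('f) + 2} \<and> card (f ` I) \<le> 2)"
    using assms(3) unfolding has_restriction_def matroid_iso_def by (auto simp: restrict_def uniform_def)
  have Lc: "card L = CARD('f) + 2" using bij_betw_same_card[OF f] by simp
  have Li: "indep M I \<longleftrightarrow> card I \<le> 2" if I: "I \<subseteq> L" for I
  proof -
    have "f ` I \<subseteq> {0..<CARD('f) + 2}" using f I by (auto simp: bij_betw_def)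
    moreover have "card (f ` I) = card I" using f I by (meson bij_betw_def card_image inj_on_subset)
    ultimately show ?thesis using fi I by auto
  qed
  obtain P g where PE: "P \<subseteq> ground M" and g: "bij_betw g P (PG2_points :: ('f ^ 3) set set)"
    and gi0: "\<forall>I. I \<subseteq> P \<longrightarrow> (indep M I \<and> I \<subseteq> P \<longleftrightarrow> indep PG2 (g ` I))"
    using assms(4) unfolding has_restriction_def matroid_iso_def by (auto simp: restrict_def PG2_def)
  have gi: "\<And>I. I \<subseteq> P \<Longrightarrow> indep M I \<longleftrightarrow> indep PG2 (g ` I)" using gi0 by auto
  interpret matPG M P g by (rule matPG.intro, unfold_locales) (use PE g gi in auto)
  obtain C R where C: "C \<subseteq> ground M" and R: "R \<subseteq> ground M" and RC: "R \<inter> C = {}"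
    and cR: "card R = CARD('f) ^ 2 + 1"
    and rk: "\<forall>I\<subseteq>R. mrank M (I \<union> C) = card I + mrank M C \<longleftrightarrow> card I \<le> 2"
    using main[OF assms(2) LE Lc Li] by blast
  define D where "D = ground M - R - C"
  have ED: "ground M - D = R \<union> C" using C R unfolding D_def by auto
  have gr: "ground (contract (delete M D) C) = R"
    using ED RC by (auto simp: contract_def delete_def restrict_def)
  have finR: "finite R" using R finE finite_subset by blast
  obtain h where h: "bij_betw h R {0..<CARD('f) ^ 2 + 1}"
    using finite_same_card_bij[OF finR, of "{0..<CARD('f) ^ 2 + 1}"] cR by auto
  have iso: "indep (contract (delete M D) C) I \<longleftrightarrow> indep (uniform 2 (CARD('f) ^ 2 + 1)) (h ` I)"
    if I: "I \<subseteq> R" for I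
  proof -
    have s1: "I \<union> C \<subseteq> ground M - D" using I ED by auto
    have s2: "C \<subseteq> ground M - D" using ED by auto
    have "indep (contract (delete M D) C) I \<longleftrightarrow> mrank M (I \<union> C) = card I + mrank M C"
      using I ED RC mrank_restrict[OF s1, of M] mrank_restrict[OF s2, of M]
      by (auto simp: contract_def delete_def restrict_def)
    also have "\<dots> \<longleftrightarrow> card I \<le> 2" using rk I by blast
    also have "\<dots> \<longleftrightarrow> indep (uniform 2 (CARD('f) ^ 2 + 1)) (h ` I)"
    proof -
      have "h ` I \<subseteq> {0..<CARD('f) ^ 2 + 1}" using h I by (auto simp: bij_betw_def)
      moreover have "card (h ` I) = card I" using h I by (meson bij_betw_def card_image inj_on_subset)
      ultimately show ?thesis by (simp add: uniform_def)
    qed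
    finally show ?thesis .
  qed
  have "matroid_iso (contract (delete M D) C) (uniform 2 (CARD('f) ^ 2 + 1))"
    unfolding matroid_iso_def
    using h iso gr by (intro exI[of _ h]) (auto simp: uniform_def)
  moreover have "C \<subseteq> ground M" "D \<subseteq> ground M" "C \<inter> D = {}" using C unfolding D_def by auto
  ultimately show ?thesis unfolding has_minor_def by blast
qed


end
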